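(* Let $\omega$ be a valid weight, let $a\in\mathbb{C}\setminus\{0\}$, and for $b\in\mathbb{C}$ let $V_b=M_{b-z}^*M_{b-z}$ act on $H^2_\omega$. Then for each $\theta\in\mathbb{R}$, $V_a$ is unitarily equivalent to $V_{ae^{i\theta}}$. In particular, $\sigma(V_a)=\sigma(V_{ae^{i\theta}})$ and $\sigma_{\mathrm p}(V_a)=\sigma_{\mathrm p}(V_{ae^{i\theta}})$ for all $\theta\in\mathbb{R}$.
   Context: A weight $\omega=\{\omega_n\}_{n\ge0}$ is called valid if it is a monotonic sequence of positive numbers with $\omega_0=1$, $\lim_{n\to\infty}\omega_{n+1}/\omega_n=1$ and $\sum_{n=0}^\infty(1-\omega_{n+1}/\omega_n)^2<\infty$. The weighted Hardy space $H^2_\omega$ is the Hilbert space of holomorphic functions $f(z)=\sum_{n\ge0}a_nz^n$ on the unit disc with $\|f\|_\omega^2=\sum_{n\ge0}|a_n|^2\omega_n<\infty$. $M_\varphi$ denotes multiplication by the polynomial $\varphi$ on $H^2_\omega$ and $M_\varphi^*$ its adjoint. $\sigma$ and $\sigma_{\mathrm p}$ denote the spectrum and point spectrum. *)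

theory Defs
  imports "HOL-Analysis.Analysis"
begin

text \<open>A holomorphic function f(z) = sum a_n z^n on the unit disc is identified with its
  Taylor coefficient sequence a :: nat => complex.\<close>

definition valid_weight :: "(nat \<Rightarrow> real) \<Rightarrow> bool" where
  "valid_weight \<omega> \<longleftrightarrow>
     (\<forall>n. \<omega> n > 0) \<and> (mono \<omega> \<or> antimono \<omega>) \<and> \<omega> 0 = 1 \<and>
     (\<lambda>n. \<omega> (Suc n) / \<omega> n) \<longlonglongrightarrow> 1 \<and>
     summable (\<lambda>n. (1 - \<omega> (Suc n) / \<omega> n)\<^sup>2)"

definition H2w :: "(nat \<Rightarrow> real) \<Rightarrow> (nat \<Rightarrow> complex) set" where
  "H2w \<omega> = {a. summable (\<lambda>n. (cmod (a n))\<^sup>2 * \<omega> n)}"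

definition w_inner :: "(nat \<Rightarrow> real) \<Rightarrow> (nat \<Rightarrow> complex) \<Rightarrow> (nat \<Rightarrow> complex) \<Rightarrow> complex" where
  "w_inner \<omega> f g = (\<Sum>n. f n * cnj (g n) * complex_of_real (\<omega> n))"

definition w_norm :: "(nat \<Rightarrow> real) \<Rightarrow> (nat \<Rightarrow> complex) \<Rightarrow> real" where
  "w_norm \<omega> f = sqrt (\<Sum>n. (cmod (f n))\<^sup>2 * \<omega> n)"

text \<open>Multiplication by the polynomial b - z, acting on coefficient sequences.\<close>
definition mult_bz :: "complex \<Rightarrow> (nat \<Rightarrow> complex) \<Rightarrow> (nat \<Rightarrow> complex)" where
  "mult_bz b f = (\<lambda>n. b * f n - (if n = 0 then 0 else f (n - 1)))"

definition w_adjoint :: "(nat \<Rightarrow> real) \<Rightarrow> ((nat \<Rightarrow> complex) \<Rightarrow> (nat \<Rightarrow> complex))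
    \<Rightarrow> (nat \<Rightarrow> complex) \<Rightarrow> (nat \<Rightarrow> complex)" where
  "w_adjoint \<omega> T g = (THE h. h \<in> H2w \<omega> \<and> (\<forall>f \<in> H2w \<omega>. w_inner \<omega> (T f) g = w_inner \<omega> f h))"

definition Vop :: "(nat \<Rightarrow> real) \<Rightarrow> complex \<Rightarrow> (nat \<Rightarrow> complex) \<Rightarrow> (nat \<Rightarrow> complex)" where
  "Vop \<omega> b = w_adjoint \<omega> (mult_bz b) \<circ> mult_bz b"

definition w_unitary :: "(nat \<Rightarrow> real) \<Rightarrow> ((nat \<Rightarrow> complex) \<Rightarrow> (nat \<Rightarrow> complex)) \<Rightarrow> bool" where
  "w_unitary \<omega> U \<longleftrightarrow> bij_betw U (H2w \<omega>) (H2w \<omega>) \<and>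
     (\<forall>f \<in> H2w \<omega>. \<forall>g \<in> H2w \<omega>. U (\<lambda>n. f n + g n) = (\<lambda>n. U f n + U g n)) \<and>
     (\<forall>c. \<forall>f \<in> H2w \<omega>. U (\<lambda>n. c * f n) = (\<lambda>n. c * U f n)) \<and>
     (\<forall>f \<in> H2w \<omega>. \<forall>g \<in> H2w \<omega>. w_inner \<omega> (U f) (U g) = w_inner \<omega> f g)"

definition unitarily_equiv :: "(nat \<Rightarrow> real) \<Rightarrow> ((nat \<Rightarrow> complex) \<Rightarrow> (nat \<Rightarrow> complex))
    \<Rightarrow> ((nat \<Rightarrow> complex) \<Rightarrow> (nat \<Rightarrow> complex)) \<Rightarrow> bool" where
  "unitarily_equiv \<omega> S T \<longleftrightarrow> (\<exists>U. w_unitary \<omega> U \<and> (\<forall>f \<in> H2w \<omega>. U (S f) = T (U f)))"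

definition w_bounded_linear :: "(nat \<Rightarrow> real) \<Rightarrow> ((nat \<Rightarrow> complex) \<Rightarrow> (nat \<Rightarrow> complex)) \<Rightarrow> bool" where
  "w_bounded_linear \<omega> S \<longleftrightarrow> S ` H2w \<omega> \<subseteq> H2w \<omega> \<and>
     (\<forall>f \<in> H2w \<omega>. \<forall>g \<in> H2w \<omega>. S (\<lambda>n. f n + g n) = (\<lambda>n. S f n + S g n)) \<and>
     (\<forall>c. \<forall>f \<in> H2w \<omega>. S (\<lambda>n. c * f n) = (\<lambda>n. c * S f n)) \<and>
     (\<exists>C. \<forall>f \<in> H2w \<omega>. w_norm \<omega> (S f) \<le> C * w_norm \<omega> f)"

definition w_spectrum :: "(nat \<Rightarrow> real) \<Rightarrow> ((nat \<Rightarrow> complex) \<Rightarrow> (nat \<Rightarrow> complex)) \<Rightarrow> complex set" where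
  "w_spectrum \<omega> T = {\<mu>. \<not> (\<exists>S. w_bounded_linear \<omega> S \<and>
      (\<forall>f \<in> H2w \<omega>. S (\<lambda>n. T f n - \<mu> * f n) = f) \<and>
      (\<forall>f \<in> H2w \<omega>. (\<lambda>n. T (S f) n - \<mu> * S f n) = f))}"

definition w_point_spectrum :: "(nat \<Rightarrow> real) \<Rightarrow> ((nat \<Rightarrow> complex) \<Rightarrow> (nat \<Rightarrow> complex)) \<Rightarrow> complex set" where
  "w_point_spectrum \<omega> T = {\<mu>. \<exists>f \<in> H2w \<omega>. f \<noteq> (\<lambda>n. 0) \<and> T f = (\<lambda>n. \<mu> * f n)}"

end

theory Submission
  imports Defs
begin

definition msq :: "complex \<Rightarrow> (nat \<Rightarrow> complex) \<Rightarrow> nat \<Rightarrow> complex" where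
  "msq c f = (\<lambda>n. c ^ n * f n)"
definition adjf :: "(nat \<Rightarrow> real) \<Rightarrow> complex \<Rightarrow> (nat \<Rightarrow> complex) \<Rightarrow> nat \<Rightarrow> complex" where
  "adjf \<omega> b g = (\<lambda>m. cnj b * g m - g (Suc m) * complex_of_real (\<omega> (Suc m) / \<omega> m))"
definition shf :: "(nat \<Rightarrow> complex) \<Rightarrow> nat \<Rightarrow> complex" where
  "shf f = (\<lambda>n. if n = 0 then 0 else f (n - 1))"

lemma sq_add_le: "(cmod (x + y))\<^sup>2 \<le> 2 * (cmod x)\<^sup>2 + 2 * (cmod y)\<^sup>2"
proof -
  have "cmod (x + y) \<le> cmod x + cmod y" by (rule norm_triangle_ineq)
  hence "(cmod (x + y))\<^sup>2 \<le> (cmod x + cmod y)\<^sup>2" by (simp add: power_mono)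
  also have "\<dots> \<le> 2 * (cmod x)\<^sup>2 + 2 * (cmod y)\<^sup>2"
  proof -
    have "0 \<le> (cmod x - cmod y)\<^sup>2" by simp
    thus ?thesis unfolding power2_diff power2_sum by linarith
  qed
  finally show ?thesis .
qed

context
  fixes \<omega> :: "nat \<Rightarrow> real" and R :: real
  assumes pos: "\<And>n. \<omega> n > 0" and rat: "\<And>n. \<omega> (Suc n) \<le> R * \<omega> n"
begin

lemma R_nonneg: "R \<ge> 0"
proof -
  have "0 < R * \<omega> 0" using pos[of "Suc 0"] rat[of 0] by linarith
  thus ?thesis using pos[of 0] by (simp add: zero_less_mult_iff)
qed

lemma H2w_add: "f \<in> H2w \<omega> \<Longrightarrow> g \<in> H2w \<omega> \<Longrightarrow> (\<lambda>n. f n + g n) \<in> H2w \<omega>"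
  unfolding H2w_def
proof safe
  assume f: "summable (\<lambda>n. (cmod (f n))\<^sup>2 * \<omega> n)" and g: "summable (\<lambda>n. (cmod (g n))\<^sup>2 * \<omega> n)"
  show "summable (\<lambda>n. (cmod (f n + g n))\<^sup>2 * \<omega> n)"
  proof (rule summable_comparison_test[OF _ summable_add[OF summable_mult[OF f, of 2] summable_mult[OF g, of 2]]])
    show "\<exists>N. \<forall>n\<ge>N. norm ((cmod (f n + g n))\<^sup>2 * \<omega> n) \<le> 2 * ((cmod (f n))\<^sup>2 * \<omega> n) + 2 * ((cmod (g n))\<^sup>2 * \<omega> n)"
    proof (intro exI allI impI)
      fix n
      have "(cmod (f n + g n))\<^sup>2 * \<omega> n \<le> (2 * (cmod (f n))\<^sup>2 + 2 * (cmod (g n))\<^sup>2) * \<omega> n"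
        using sq_add_le pos[of n] mult_right_mono less_imp_le by blast
      then show "norm ((cmod (f n + g n))\<^sup>2 * \<omega> n) \<le> 2 * ((cmod (f n))\<^sup>2 * \<omega> n) + 2 * ((cmod (g n))\<^sup>2 * \<omega> n)"
        using pos[of n] by (simp add: algebra_simps abs_mult)
    qed
  qed
qed

lemma H2w_scale: "f \<in> H2w \<omega> \<Longrightarrow> (\<lambda>n. c * f n) \<in> H2w \<omega>"
  unfolding H2w_def using summable_mult[of _ "(cmod c)\<^sup>2"]
  by (simp add: norm_mult power_mult_distrib mult.assoc)

lemma H2w_diff: "f \<in> H2w \<omega> \<Longrightarrow> g \<in> H2w \<omega> \<Longrightarrow> (\<lambda>n. f n - g n) \<in> H2w \<omega>"
  using H2w_add[of f "\<lambda>n. (-1) * g n"] H2w_scale[of g "-1"] by simp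

lemma H2w_shf: "f \<in> H2w \<omega> \<Longrightarrow> shf f \<in> H2w \<omega>"
  unfolding H2w_def
proof safe
  assume f: "summable (\<lambda>n. (cmod (f n))\<^sup>2 * \<omega> n)"
  have "summable (\<lambda>n. (cmod (shf f (Suc n)))\<^sup>2 * \<omega> (Suc n))"
  proof (rule summable_comparison_test[OF _ summable_mult[OF f, of R]])
    show "\<exists>N. \<forall>n\<ge>N. norm ((cmod (shf f (Suc n)))\<^sup>2 * \<omega> (Suc n)) \<le> R * ((cmod (f n))\<^sup>2 * \<omega> n)"
    proof (intro exI allI impI)
      fix n
      have "(cmod (f n))\<^sup>2 * \<omega> (Suc n) \<le> (cmod (f n))\<^sup>2 * (R * \<omega> n)"
        using rat[of n] by (simp add: mult_left_mono)
      then show "norm ((cmod (shf f (Suc n)))\<^sup>2 * \<omega> (Suc n)) \<le> R * ((cmod (f n))\<^sup>2 * \<omega> n)"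
        using pos[of "Suc n"] by (simp add: shf_def algebra_simps abs_mult)
    qed
  qed
  then show "summable (\<lambda>n. (cmod (shf f n))\<^sup>2 * \<omega> n)"
    using summable_Suc_iff[of "\<lambda>n. (cmod (shf f n))\<^sup>2 * \<omega> n"] by blast
qed

lemma H2w_back: "g \<in> H2w \<omega> \<Longrightarrow> (\<lambda>m. g (Suc m) * complex_of_real (\<omega> (Suc m) / \<omega> m)) \<in> H2w \<omega>"
  unfolding H2w_def
proof safe
  assume g: "summable (\<lambda>n. (cmod (g n))\<^sup>2 * \<omega> n)"
  hence g': "summable (\<lambda>n. (cmod (g (Suc n)))\<^sup>2 * \<omega> (Suc n))"
    using summable_Suc_iff[of "\<lambda>n. (cmod (g n))\<^sup>2 * \<omega> n"] by blast
  show "summable (\<lambda>m. (cmod (g (Suc m) * complex_of_real (\<omega> (Suc m) / \<omega> m)))\<^sup>2 * \<omega> m)"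
  proof (rule summable_comparison_test[OF _ summable_mult[OF g', of R]])
    show "\<exists>N. \<forall>n\<ge>N. norm ((cmod (g (Suc n) * complex_of_real (\<omega> (Suc n) / \<omega> n)))\<^sup>2 * \<omega> n) \<le> R * ((cmod (g (Suc n)))\<^sup>2 * \<omega> (Suc n))"
    proof (intro exI allI impI)
      fix n
      have p: "\<omega> n > 0" "\<omega> (Suc n) > 0" using pos by auto
      have nm: "cmod (g (Suc n) * complex_of_real (\<omega> (Suc n) / \<omega> n)) = cmod (g (Suc n)) * (\<omega> (Suc n) / \<omega> n)"
        using p by (simp only: norm_mult norm_of_real) simp
      have e: "(cmod (g (Suc n) * complex_of_real (\<omega> (Suc n) / \<omega> n)))\<^sup>2 * \<omega> n
          = (cmod (g (Suc n)))\<^sup>2 * \<omega> (Suc n) * (\<omega> (Suc n) / \<omega> n)"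
        using p unfolding nm by (simp add: power2_eq_square field_simps)
      have "\<omega> (Suc n) / \<omega> n \<le> R" using rat[of n] p by (simp add: divide_le_eq)
      hence "(cmod (g (Suc n)))\<^sup>2 * \<omega> (Suc n) * (\<omega> (Suc n) / \<omega> n) \<le> (cmod (g (Suc n)))\<^sup>2 * \<omega> (Suc n) * R"
        by (rule mult_left_mono) (use p in auto)
      then show "norm ((cmod (g (Suc n) * complex_of_real (\<omega> (Suc n) / \<omega> n)))\<^sup>2 * \<omega> n) \<le> R * ((cmod (g (Suc n)))\<^sup>2 * \<omega> (Suc n))"
        using e p by (simp add: algebra_simps abs_mult)
    qed
  qed
qed

lemma summable_inner: "f \<in> H2w \<omega> \<Longrightarrow> g \<in> H2w \<omega> \<Longrightarrow> summable (\<lambda>n. f n * cnj (g n) * complex_of_real (\<omega> n))"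
  unfolding H2w_def
proof safe
  assume f: "summable (\<lambda>n. (cmod (f n))\<^sup>2 * \<omega> n)" and g: "summable (\<lambda>n. (cmod (g n))\<^sup>2 * \<omega> n)"
  show "summable (\<lambda>n. f n * cnj (g n) * complex_of_real (\<omega> n))"
  proof (rule summable_comparison_test[OF _ summable_add[OF f g]])
    show "\<exists>N. \<forall>n\<ge>N. norm (f n * cnj (g n) * complex_of_real (\<omega> n)) \<le> (cmod (f n))\<^sup>2 * \<omega> n + (cmod (g n))\<^sup>2 * \<omega> n"
    proof (intro exI allI impI)
      fix n
      have "cmod (f n) * cmod (g n) \<le> (cmod (f n))\<^sup>2 + (cmod (g n))\<^sup>2"
      proof -
        have "0 \<le> (cmod (f n) - cmod (g n))\<^sup>2" by simp
        moreover have "0 \<le> cmod (f n) * cmod (g n)" by simp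
        ultimately show ?thesis unfolding power2_diff by linarith
      qed
      hence "cmod (f n) * cmod (g n) * \<omega> n \<le> ((cmod (f n))\<^sup>2 + (cmod (g n))\<^sup>2) * \<omega> n"
        using pos[of n] by (simp add: mult_right_mono)
      then show "norm (f n * cnj (g n) * complex_of_real (\<omega> n)) \<le> (cmod (f n))\<^sup>2 * \<omega> n + (cmod (g n))\<^sup>2 * \<omega> n"
        using pos[of n] by (simp add: norm_mult algebra_simps abs_of_pos)
    qed
  qed
qed


lemma mult_bz_eq: "mult_bz b f = (\<lambda>n. b * f n - shf f n)"
  by (auto simp: mult_bz_def shf_def)

lemma H2w_mult_bz: "f \<in> H2w \<omega> \<Longrightarrow> mult_bz b f \<in> H2w \<omega>"
  unfolding mult_bz_eq by (intro H2w_diff H2w_scale H2w_shf)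

lemma H2w_adjf: "g \<in> H2w \<omega> \<Longrightarrow> adjf \<omega> b g \<in> H2w \<omega>"
  unfolding adjf_def by (intro H2w_diff H2w_scale H2w_back)

lemma inner_adj:
  assumes f: "f \<in> H2w \<omega>" and g: "g \<in> H2w \<omega>"
  shows "w_inner \<omega> (mult_bz b f) g = w_inner \<omega> f (adjf \<omega> b g)"
proof -
  define A where "A n = f n * cnj (g n) * complex_of_real (\<omega> n)" for n
  define B where "B n = shf f n * cnj (g n) * complex_of_real (\<omega> n)" for n
  have sA: "summable A" unfolding A_def by (rule summable_inner[OF f g])
  have sB: "summable B" unfolding B_def by (rule summable_inner[OF H2w_shf[OF f] g])
  have sB': "summable (\<lambda>n. B (Suc n))" using sB summable_Suc_iff[of B] by blast
  have B0: "B 0 = 0" by (simp add: B_def shf_def)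
  have "w_inner \<omega> (mult_bz b f) g = (\<Sum>n. b * A n - B n)"
    unfolding w_inner_def mult_bz_eq A_def B_def by (simp add: algebra_simps)
  also have "\<dots> = b * suminf A - suminf B"
    using suminf_diff[OF summable_mult[OF sA, of b] sB] suminf_mult[OF sA, of b] by simp
  also have "suminf B = (\<Sum>n. B (Suc n))" using suminf_split_head[OF sB] B0 by simp
  also have "b * suminf A - (\<Sum>n. B (Suc n)) = (\<Sum>n. b * A n - B (Suc n))"
    using suminf_diff[OF summable_mult[OF sA, of b] sB'] suminf_mult[OF sA, of b] by simp
  also have "\<dots> = w_inner \<omega> f (adjf \<omega> b g)"
    unfolding w_inner_def
  proof (rule suminf_cong)
    fix n
    have "\<omega> n \<noteq> 0" using pos[of n] by simp
    then show "b * A n - B (Suc n) = f n * cnj (adjf \<omega> b g n) * complex_of_real (\<omega> n)"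
      unfolding A_def B_def adjf_def shf_def by (simp add: field_simps)
  qed
  finally show ?thesis .
qed

lemma inner_unique:
  assumes "\<And>f. f \<in> H2w \<omega> \<Longrightarrow> w_inner \<omega> f h1 = w_inner \<omega> f h2"
  shows "h1 = h2"
proof
  fix m
  define e where "e = (\<lambda>n::nat. if n = m then (1::complex) else 0)"
  have eH: "e \<in> H2w \<omega>"
  proof -
    have "(\<lambda>n. (cmod (e n))\<^sup>2 * \<omega> n) = (\<lambda>n. if n = m then \<omega> n else 0)"
      by (auto simp: e_def)
    thus ?thesis unfolding H2w_def using sums_single[of m \<omega>] sums_summable by fastforce
  qed
  have "w_inner \<omega> e h = cnj (h m) * complex_of_real (\<omega> m)" for h
  proof -
    have "(\<lambda>n. e n * cnj (h n) * complex_of_real (\<omega> n)) = (\<lambda>n. if n = m then cnj (h n) * complex_of_real (\<omega> n) else 0)"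
      by (auto simp: e_def)
    thus ?thesis unfolding w_inner_def using sums_single[of m "\<lambda>n. cnj (h n) * complex_of_real (\<omega> n)"] sums_unique by fastforce
  qed
  with assms[OF eH] have "cnj (h1 m) * complex_of_real (\<omega> m) = cnj (h2 m) * complex_of_real (\<omega> m)" by simp
  moreover have "complex_of_real (\<omega> m) \<noteq> 0" using pos[of m] by simp
  ultimately show "h1 m = h2 m" by simp
qed

lemma adjoint_eq:
  assumes g: "g \<in> H2w \<omega>"
  shows "w_adjoint \<omega> (mult_bz b) g = adjf \<omega> b g"
  unfolding w_adjoint_def
proof (rule the1_equality)
  show "adjf \<omega> b g \<in> H2w \<omega> \<and> (\<forall>f\<in>H2w \<omega>. w_inner \<omega> (mult_bz b f) g = w_inner \<omega> f (adjf \<omega> b g))"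
    using H2w_adjf[OF g] inner_adj[OF _ g] by blast
  then show "\<exists>!h. h \<in> H2w \<omega> \<and> (\<forall>f\<in>H2w \<omega>. w_inner \<omega> (mult_bz b f) g = w_inner \<omega> f h)"
    using inner_unique by metis
qed

end

lemma unit_cnj: "cmod c = 1 \<Longrightarrow> c * cnj c = 1"
  using complex_norm_square[of c] by simp

lemma msq_msq: "c * d = 1 \<Longrightarrow> msq c (msq d f) = f"
  unfolding msq_def by (simp add: mult.assoc[symmetric] power_mult_distrib[symmetric])

lemma msq_add: "msq c (\<lambda>n. x n + y n) = (\<lambda>n. msq c x n + msq c y n)"
  unfolding msq_def by (simp add: algebra_simps)
lemma msq_diff: "msq c (\<lambda>n. x n - y n) = (\<lambda>n. msq c x n - msq c y n)"
  unfolding msq_def by (simp add: algebra_simps)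
lemma msq_scale: "msq c (\<lambda>n. k * x n) = (\<lambda>n. k * msq c x n)"
  unfolding msq_def by (simp add: algebra_simps)

lemma msq_cmod: "cmod c = 1 \<Longrightarrow> cmod (msq c f n) = cmod (f n)"
  unfolding msq_def by (simp add: norm_mult norm_power)

lemma msq_H2w: "cmod c = 1 \<Longrightarrow> f \<in> H2w \<omega> \<Longrightarrow> msq c f \<in> H2w \<omega>"
  unfolding H2w_def using msq_cmod[of c f] by simp

lemma msq_norm: "cmod c = 1 \<Longrightarrow> w_norm \<omega> (msq c f) = w_norm \<omega> f"
  unfolding w_norm_def using msq_cmod[of c f] by simp

lemma msq_inner: "cmod c = 1 \<Longrightarrow> w_inner \<omega> (msq c f) (msq c g) = w_inner \<omega> f g"
proof -
  assume c: "cmod c = 1"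
  have pw: "c ^ n * f n * cnj (c ^ n * g n) = f n * cnj (g n)" for n
  proof -
    have "c ^ n * f n * cnj (c ^ n * g n) = (c * cnj c) ^ n * (f n * cnj (g n))"
      by (simp add: power_mult_distrib algebra_simps)
    thus ?thesis using unit_cnj[OF c] by simp
  qed
  have eq: "(\<lambda>n. c ^ n * f n * cnj (c ^ n * g n) * complex_of_real (\<omega> n)) = (\<lambda>n. f n * cnj (g n) * complex_of_real (\<omega> n))"
    by (rule ext) (subst pw, rule refl)
  show ?thesis unfolding w_inner_def msq_def by (subst eq) (rule refl)
qed

lemma transfer_spec:
  assumes c: "cmod c = 1" and cd: "c * d = 1"
    and inter: "\<And>f. f \<in> H2w \<omega> \<Longrightarrow> T' (msq c f) = msq c (T f)"
  shows "w_spectrum \<omega> T' \<subseteq> w_spectrum \<omega> T" "w_point_spectrum \<omega> T \<subseteq> w_point_spectrum \<omega> T'"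
proof -
  have d: "cmod d = 1"
  proof -
    have "cmod (c * d) = 1" using cd by simp
    hence "cmod c * cmod d = 1" by (simp only: norm_mult)
    thus ?thesis using c by simp
  qed
  have dc: "d * c = 1" using cd by (simp add: mult.commute)
  show "w_spectrum \<omega> T' \<subseteq> w_spectrum \<omega> T"
  proof
    fix \<mu> assume "\<mu> \<in> w_spectrum \<omega> T'"
    show "\<mu> \<in> w_spectrum \<omega> T"
    proof (rule ccontr)
      assume "\<mu> \<notin> w_spectrum \<omega> T"
      then obtain S where BL: "w_bounded_linear \<omega> S"
        and i1: "\<forall>f \<in> H2w \<omega>. S (\<lambda>n. T f n - \<mu> * f n) = f"
        and i2: "\<forall>f \<in> H2w \<omega>. (\<lambda>n. T (S f) n - \<mu> * S f n) = f"
        unfolding w_spectrum_def by blast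
      from BL have im: "S ` H2w \<omega> \<subseteq> H2w \<omega>"
        and ad: "\<forall>f \<in> H2w \<omega>. \<forall>g \<in> H2w \<omega>. S (\<lambda>n. f n + g n) = (\<lambda>n. S f n + S g n)"
        and sc: "\<forall>k. \<forall>f \<in> H2w \<omega>. S (\<lambda>n. k * f n) = (\<lambda>n. k * S f n)"
        and bd: "\<exists>C. \<forall>f \<in> H2w \<omega>. w_norm \<omega> (S f) \<le> C * w_norm \<omega> f"
        unfolding w_bounded_linear_def by blast+
      obtain C where C: "\<forall>f \<in> H2w \<omega>. w_norm \<omega> (S f) \<le> C * w_norm \<omega> f" using bd by blast
      define S' where "S' g = msq c (S (msq d g))" for g
      have S'H: "S' g \<in> H2w \<omega>" if "g \<in> H2w \<omega>" for g
        unfolding S'_def using msq_H2w[OF c] msq_H2w[OF d] im that by blast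
      have "w_bounded_linear \<omega> S'"
        unfolding w_bounded_linear_def
      proof (intro conjI ballI allI)
        show "S' ` H2w \<omega> \<subseteq> H2w \<omega>" using S'H by blast
      next
        fix f g assume "f \<in> H2w \<omega>" "g \<in> H2w \<omega>"
        then show "S' (\<lambda>n. f n + g n) = (\<lambda>n. S' f n + S' g n)"
          unfolding S'_def msq_add using ad msq_H2w[OF d] by (simp add: msq_add)
      next
        fix k f assume "f \<in> H2w \<omega>"
        then show "S' (\<lambda>n. k * f n) = (\<lambda>n. k * S' f n)"
          unfolding S'_def msq_scale using sc msq_H2w[OF d] by (simp add: msq_scale)
      next
        show "\<exists>C. \<forall>f \<in> H2w \<omega>. w_norm \<omega> (S' f) \<le> C * w_norm \<omega> f"
        proof (intro exI ballI)
          fix f assume f: "f \<in> H2w \<omega>"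
          have "w_norm \<omega> (S (msq d f)) \<le> C * w_norm \<omega> (msq d f)" using C msq_H2w[OF d f] by blast
          then show "w_norm \<omega> (S' f) \<le> C * w_norm \<omega> f"
            unfolding S'_def msq_norm[OF c] msq_norm[OF d] .
        qed
      qed
      moreover have "\<forall>g \<in> H2w \<omega>. S' (\<lambda>n. T' g n - \<mu> * g n) = g"
      proof
        fix g assume g: "g \<in> H2w \<omega>"
        have gd: "msq d g \<in> H2w \<omega>" using msq_H2w[OF d g] .
        have "T' g = msq c (T (msq d g))" using inter[OF gd] msq_msq[OF cd] by simp
        hence "msq d (\<lambda>n. T' g n - \<mu> * g n) = (\<lambda>n. T (msq d g) n - \<mu> * msq d g n)"
          by (simp add: msq_diff msq_scale msq_msq[OF dc])
        thus "S' (\<lambda>n. T' g n - \<mu> * g n) = g" unfolding S'_def using i1 gd msq_msq[OF cd] by simp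
      qed
      moreover have "\<forall>g \<in> H2w \<omega>. (\<lambda>n. T' (S' g) n - \<mu> * S' g n) = g"
      proof
        fix g assume g: "g \<in> H2w \<omega>"
        have gd: "msq d g \<in> H2w \<omega>" using msq_H2w[OF d g] .
        have x: "S (msq d g) \<in> H2w \<omega>" using im gd by blast
        have "(\<lambda>n. T' (S' g) n - \<mu> * S' g n) = msq c (\<lambda>n. T (S (msq d g)) n - \<mu> * S (msq d g) n)"
          unfolding S'_def inter[OF x] by (simp add: msq_diff msq_scale)
        also have "\<dots> = g" using i2 gd msq_msq[OF cd] by simp
        finally show "(\<lambda>n. T' (S' g) n - \<mu> * S' g n) = g" .
      qed
      ultimately have "\<mu> \<notin> w_spectrum \<omega> T'" unfolding w_spectrum_def by blast
      with \<open>\<mu> \<in> w_spectrum \<omega> T'\<close> show False by blast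
    qed
  qed
  show "w_point_spectrum \<omega> T \<subseteq> w_point_spectrum \<omega> T'"
  proof
    fix \<mu> assume "\<mu> \<in> w_point_spectrum \<omega> T"
    then obtain f where f: "f \<in> H2w \<omega>" "f \<noteq> (\<lambda>n. 0)" "T f = (\<lambda>n. \<mu> * f n)"
      unfolding w_point_spectrum_def by blast
    have "msq c f \<noteq> (\<lambda>n. 0)"
    proof
      assume "msq c f = (\<lambda>n. 0)"
      hence "msq d (msq c f) = (\<lambda>n. 0)" by (simp add: msq_def)
      with f(2) show False using msq_msq[OF dc] by simp
    qed
    moreover have "T' (msq c f) = (\<lambda>n. \<mu> * msq c f n)" using inter[OF f(1)] f(3) by (simp add: msq_scale)
    ultimately show "\<mu> \<in> w_point_spectrum \<omega> T'"
      unfolding w_point_spectrum_def using msq_H2w[OF c f(1)] by blast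
  qed
qed

lemma inter_swap:
  assumes c: "cmod c = 1" and cd: "c * d = 1"
    and inter: "\<And>f. f \<in> H2w \<omega> \<Longrightarrow> T' (msq c f) = msq c (T f)"
    and g: "g \<in> H2w \<omega>"
  shows "T (msq d g) = msq d (T' g)"
proof -
  have d: "cmod d = 1"
  proof -
    have "cmod (c * d) = 1" using cd by simp
    hence "cmod c * cmod d = 1" by (simp only: norm_mult)
    thus ?thesis using c by simp
  qed
  have dc: "d * c = 1" using cd by (simp add: mult.commute)
  have "T' g = msq c (T (msq d g))" using inter[OF msq_H2w[OF d g]] msq_msq[OF cd] by simp
  thus ?thesis using msq_msq[OF dc] by simp
qed


lemma Vop_inter:
  assumes pos: "\<And>n. \<omega> n > 0" and rat: "\<And>n. \<omega> (Suc n) \<le> R * \<omega> n"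
    and uv: "u * v = 1" and v1: "cmod v = 1" and vc: "v = cnj u" and f: "f \<in> H2w \<omega>"
  shows "Vop \<omega> (a * u) (msq v f) = msq v (Vop \<omega> a f)"
proof -
  define G where "G = mult_bz a f"
  have G: "G \<in> H2w \<omega>" unfolding G_def using H2w_mult_bz[where \<omega>=\<omega> and R=R] pos rat f by blast
  have e1: "mult_bz (a * u) (msq v f) = (\<lambda>n. u * msq v G n)"
  proof
    fix n show "mult_bz (a * u) (msq v f) n = u * msq v G n"
    proof (cases n)
      case 0 then show ?thesis by (simp add: mult_bz_def msq_def G_def)
    next
      case (Suc m)
      have "u * v ^ Suc m = v ^ m" using uv by (simp add: mult.assoc[symmetric])
      then show ?thesis using Suc by (simp add: mult_bz_def msq_def G_def algebra_simps)
    qed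
  qed
  have H: "(\<lambda>n. u * msq v G n) \<in> H2w \<omega>"
    using H2w_scale[where \<omega>=\<omega> and R=R] pos rat msq_H2w[OF v1 G] by blast
  have "Vop \<omega> (a * u) (msq v f) = adjf \<omega> (a * u) (\<lambda>n. u * msq v G n)"
    unfolding Vop_def o_def e1 using adjoint_eq[where \<omega>=\<omega> and R=R] pos rat H by blast
  also have "\<dots> = msq v (adjf \<omega> a G)"
  proof
    fix m
    have 1: "cnj u * u = 1" using uv vc by (simp add: mult.commute)
    have 2: "u * v ^ Suc m = v ^ m" using uv by (simp add: mult.assoc[symmetric])
    have A0: "cnj (a * u) * (u * (v ^ m * G m)) = cnj a * (cnj u * u) * (v ^ m * G m)"
      by (simp add: mult_ac)
    have A: "cnj (a * u) * (u * (v ^ m * G m)) = v ^ m * (cnj a * G m)"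
      unfolding A0 1 by (simp add: mult_ac)
    have B: "u * (v ^ Suc m * G (Suc m)) = v ^ m * G (Suc m)"
      unfolding mult.assoc[symmetric] 2 by (rule refl)
    show "adjf \<omega> (a * u) (\<lambda>n. u * msq v G n) m = msq v (adjf \<omega> a G) m"
      by (simp only: adjf_def msq_def A B) (simp add: algebra_simps)
  qed
  also have "\<dots> = msq v (Vop \<omega> a f)"
    unfolding Vop_def o_def G_def using adjoint_eq[where \<omega>=\<omega> and R=R] pos rat G[unfolded G_def] by simp
  finally show ?thesis .
qed

theorem lemma4p1:
  fixes \<omega> :: "nat \<Rightarrow> real" and a :: complex and \<theta> :: real
  assumes "valid_weight \<omega>" and "a \<noteq> 0"
  shows "unitarily_equiv \<omega> (Vop \<omega> a) (Vop \<omega> (a * exp (\<i> * complex_of_real \<theta>)))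
    \<and> w_spectrum \<omega> (Vop \<omega> a) = w_spectrum \<omega> (Vop \<omega> (a * exp (\<i> * complex_of_real \<theta>)))
    \<and> w_point_spectrum \<omega> (Vop \<omega> a) = w_point_spectrum \<omega> (Vop \<omega> (a * exp (\<i> * complex_of_real \<theta>)))"
proof -
  define u where "u = exp (\<i> * complex_of_real \<theta>)"
  define v where "v = cnj u"
  have u1: "cmod u = 1" unfolding u_def by (rule norm_exp_i_times)
  have v1: "cmod v = 1" unfolding v_def using u1 by simp
  have uv: "u * v = 1" unfolding v_def by (rule unit_cnj[OF u1])
  have vu: "v * u = 1" using uv by (simp add: mult.commute)
  have pos: "\<And>n. \<omega> n > 0" using assms(1) unfolding valid_weight_def by blast
  have "convergent (\<lambda>n. \<omega> (Suc n) / \<omega> n)" using assms(1) unfolding valid_weight_def convergent_def by blast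
  then have "Bseq (\<lambda>n. \<omega> (Suc n) / \<omega> n)" by (rule convergent_imp_Bseq)
  then obtain K where K0: "\<forall>n. norm (\<omega> (Suc n) / \<omega> n) \<le> K" by (rule BseqE) blast
  have K: "\<And>n. norm (\<omega> (Suc n) / \<omega> n) \<le> K" using K0 by blast
  have rat: "\<And>n. \<omega> (Suc n) \<le> K * \<omega> n"
  proof -
    fix n
    have "\<omega> (Suc n) / \<omega> n \<le> K" using K[of n] pos[of n] pos[of "Suc n"] by simp
    thus "\<omega> (Suc n) \<le> K * \<omega> n" using pos[of n] by (simp add: divide_le_eq)
  qed
  have inter: "\<And>f. f \<in> H2w \<omega> \<Longrightarrow> Vop \<omega> (a * u) (msq v f) = msq v (Vop \<omega> a f)"
    using Vop_inter[where \<omega>=\<omega> and R=K, OF pos rat uv v1 v_def] by blast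
  have inter2: "\<And>g. g \<in> H2w \<omega> \<Longrightarrow> Vop \<omega> a (msq u g) = msq u (Vop \<omega> (a * u) g)"
    using inter_swap[where T="Vop \<omega> a" and T'="Vop \<omega> (a * u)", OF v1 vu inter] by blast
  have "w_unitary \<omega> (msq v)"
    unfolding w_unitary_def
  proof (intro conjI ballI allI)
    show "bij_betw (msq v) (H2w \<omega>) (H2w \<omega>)"
      by (rule bij_betw_byWitness[where f'="msq u"])
         (auto simp: msq_msq[OF uv] msq_msq[OF vu] msq_H2w[OF v1] msq_H2w[OF u1])
  qed (auto simp: msq_add msq_scale msq_inner[OF v1])
  hence ue: "unitarily_equiv \<omega> (Vop \<omega> a) (Vop \<omega> (a * u))"
    unfolding unitarily_equiv_def using inter by metis
  have s1: "w_spectrum \<omega> (Vop \<omega> (a * u)) \<subseteq> w_spectrum \<omega> (Vop \<omega> a)"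
    and p1: "w_point_spectrum \<omega> (Vop \<omega> a) \<subseteq> w_point_spectrum \<omega> (Vop \<omega> (a * u))"
    using transfer_spec[where T="Vop \<omega> a" and T'="Vop \<omega> (a * u)", OF v1 vu inter] by blast+
  have s2: "w_spectrum \<omega> (Vop \<omega> a) \<subseteq> w_spectrum \<omega> (Vop \<omega> (a * u))"
    and p2: "w_point_spectrum \<omega> (Vop \<omega> (a * u)) \<subseteq> w_point_spectrum \<omega> (Vop \<omega> a)"
    using transfer_spec[where T'="Vop \<omega> a" and T="Vop \<omega> (a * u)", OF u1 uv inter2] by blast+
  show ?thesis using ue s1 s2 p1 p2 unfolding u_def by blast
qed

end
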